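(* Let $G_1$ and $G_2$ be connected graphs, let $H=G_1+G_2$ be their join, and let $g$ be a constant function from the vertex set of the first copy of $H$ to the vertex set of the second copy of $H$. Then $fix(F_H)=2\,fix(H)-i$ for some $i\in\{0,1\}$.
   Context: The join $G_1+G_2$ of graphs with disjoint vertex sets is the union $G_1\cup G_2$ together with all edges joining every vertex of $G_1$ to every vertex of $G_2$. A set $S\subseteq V(H)$ is a fixing set of a graph $H$ if the only automorphism of $H$ fixing every vertex of $S$ is the identity; $fix(H)$ is the minimum cardinality of a fixing set of $H$. Functigraph: let $H_1,H_2$ be disjoint copies of a connected graph $H$, with $A=V(H_1)$, $B=V(H_2)$, and let $g:A\to B$ be a function. The functigraph $F_H$ has vertex set $A\cup B$ and edge set $E(H_1)\cup E(H_2)\cup\{ug(u):u\in A\}$. *)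

theory Defs
  imports Main
begin

definition simple_graph :: "'a set \<Rightarrow> ('a \<Rightarrow> 'a \<Rightarrow> bool) \<Rightarrow> bool" where
  "simple_graph V E \<longleftrightarrow> finite V \<and> (\<forall>u v. E u v \<longrightarrow> u \<in> V \<and> v \<in> V)
     \<and> (\<forall>u v. E u v \<longrightarrow> E v u) \<and> (\<forall>u. \<not> E u u)"

definition connected_graph :: "'a set \<Rightarrow> ('a \<Rightarrow> 'a \<Rightarrow> bool) \<Rightarrow> bool" where
  "connected_graph V E \<longleftrightarrow> simple_graph V E \<and> V \<noteq> {} \<and>
     (\<forall>u\<in>V. \<forall>v\<in>V. E\<^sup>*\<^sup>* u v)"

definition automorphisms :: "'a set \<Rightarrow> ('a \<Rightarrow> 'a \<Rightarrow> bool) \<Rightarrow> ('a \<Rightarrow> 'a) set" where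
  "automorphisms V E = {f. bij_betw f V V \<and> (\<forall>x. x \<notin> V \<longrightarrow> f x = x)
     \<and> (\<forall>u\<in>V. \<forall>v\<in>V. E u v \<longleftrightarrow> E (f u) (f v))}"

definition fixing_set :: "'a set \<Rightarrow> ('a \<Rightarrow> 'a \<Rightarrow> bool) \<Rightarrow> 'a set \<Rightarrow> bool" where
  "fixing_set V E S \<longleftrightarrow> S \<subseteq> V \<and>
     (\<forall>f\<in>automorphisms V E. (\<forall>s\<in>S. f s = s) \<longrightarrow> (\<forall>v\<in>V. f v = v))"

definition fixing_number :: "'a set \<Rightarrow> ('a \<Rightarrow> 'a \<Rightarrow> bool) \<Rightarrow> nat" where
  "fixing_number V E = (LEAST n. \<exists>S. fixing_set V E S \<and> card S = n)"

definition join_vertices :: "'a set \<Rightarrow> 'b set \<Rightarrow> ('a + 'b) set" where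
  "join_vertices V1 V2 = Inl ` V1 \<union> Inr ` V2"

fun join_edges :: "'a set \<Rightarrow> ('a \<Rightarrow> 'a \<Rightarrow> bool) \<Rightarrow> 'b set \<Rightarrow> ('b \<Rightarrow> 'b \<Rightarrow> bool)
    \<Rightarrow> ('a + 'b) \<Rightarrow> ('a + 'b) \<Rightarrow> bool" where
  "join_edges V1 E1 V2 E2 (Inl x) (Inl y) = E1 x y"
| "join_edges V1 E1 V2 E2 (Inr x) (Inr y) = E2 x y"
| "join_edges V1 E1 V2 E2 (Inl x) (Inr y) = (x \<in> V1 \<and> y \<in> V2)"
| "join_edges V1 E1 V2 E2 (Inr x) (Inl y) = (x \<in> V2 \<and> y \<in> V1)"

text \<open>Functigraph of H = (V,E) w.r.t. g : A \<rightarrow> B, where A = Inl ` V is the first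
  copy and B = Inr ` V the second copy; g is given as a map V \<rightarrow> V
  (vertex u of the first copy is sent to vertex g u of the second copy).\<close>
definition functigraph_vertices :: "'v set \<Rightarrow> ('v + 'v) set" where
  "functigraph_vertices V = Inl ` V \<union> Inr ` V"

fun functigraph_edges :: "'v set \<Rightarrow> ('v \<Rightarrow> 'v \<Rightarrow> bool) \<Rightarrow> ('v \<Rightarrow> 'v)
    \<Rightarrow> ('v + 'v) \<Rightarrow> ('v + 'v) \<Rightarrow> bool" where
  "functigraph_edges V E g (Inl x) (Inl y) = E x y"
| "functigraph_edges V E g (Inr x) (Inr y) = E x y"
| "functigraph_edges V E g (Inl x) (Inr y) = (x \<in> V \<and> y = g x)"
| "functigraph_edges V E g (Inr y) (Inl x) = (x \<in> V \<and> y = g x)"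

end

theory Submission
  imports Defs
begin

definition nb :: "'a set \<Rightarrow> ('a \<Rightarrow> 'a \<Rightarrow> bool) \<Rightarrow> 'a \<Rightarrow> 'a set" where
  "nb V F x = {y \<in> V. F x y}"

lemma aut_nb:
  assumes f: "f \<in> automorphisms V F" and x: "x \<in> V"
  shows "card (nb V F (f x)) = card (nb V F x)"
proof -
  have b: "bij_betw f V V" and e: "\<forall>u\<in>V. \<forall>v\<in>V. F u v \<longleftrightarrow> F (f u) (f v)"
    using f by (auto simp: automorphisms_def)
  have "f ` nb V F x = nb V F (f x)"
  proof
    show "f ` nb V F x \<subseteq> nb V F (f x)"
      using b e x by (auto simp: nb_def bij_betw_def)
    show "nb V F (f x) \<subseteq> f ` nb V F x"
    proof
      fix z assume z: "z \<in> nb V F (f x)"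
      then have "z \<in> V" "F (f x) z" by (auto simp: nb_def)
      then obtain y where y: "y \<in> V" "z = f y" using b by (auto simp: bij_betw_def)
      then show "z \<in> f ` nb V F x" using e x \<open>F (f x) z\<close> by (auto simp: nb_def)
    qed
  qed
  moreover have "inj_on f (nb V F x)"
    using b by (auto simp: bij_betw_def nb_def intro: inj_on_subset)
  ultimately show ?thesis by (metis card_image)
qed

locale setting =
  fixes W :: "'v set" and E :: "'v \<Rightarrow> 'v \<Rightarrow> bool" and g :: "'v \<Rightarrow> 'v" and c :: 'v
  assumes finW: "finite W"
    and Ein: "\<And>x y. E x y \<Longrightarrow> x \<in> W \<and> y \<in> W"
    and irr: "\<And>x. \<not> E x x"
    and cW: "c \<in> W"
    and gc: "\<And>u. u \<in> W \<Longrightarrow> g u = c"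
    and cnb: "\<exists>m\<in>W. E c m"
    and near: "\<And>x y. x \<in> W \<Longrightarrow> y \<in> W \<Longrightarrow> E x y \<or> (\<exists>m. E x m \<and> E m y)"
begin

abbreviation "V' \<equiv> functigraph_vertices W"
abbreviation "F \<equiv> functigraph_edges W E g"

lemma card_nb_c: "card (nb V' F (Inr c)) \<ge> card W + 1"
proof -
  obtain m where m: "m \<in> W" "E c m" using cnb by blast
  have sub: "insert (Inr m) (Inl ` W) \<subseteq> nb V' F (Inr c)"
    using m cW gc by (auto simp: nb_def functigraph_vertices_def)
  have fin: "finite (nb V' F (Inr c))" using finW by (auto simp: nb_def functigraph_vertices_def)
  have "card (insert (Inr m) (Inl ` W)) = card W + 1"
    using finW by (subst card_insert_disjoint) (auto simp: card_image)
  then show ?thesis using card_mono[OF fin sub] by simp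
qed

lemma card_nb_l: assumes "x \<in> W" shows "card (nb V' F (Inl x)) \<le> card W"
proof -
  have sub: "nb V' F (Inl x) \<subseteq> insert (Inr c) (Inl ` (W - {x}))"
    using assms gc irr by (auto simp: nb_def functigraph_vertices_def)
  have "card (insert (Inr c) (Inl ` (W - {x}))) \<le> card W"
  proof -
    have "card (insert (Inr c) (Inl ` (W - {x}))) \<le> card (Inl ` (W - {x}) :: ('v+'v) set) + 1"
      using finW by (auto simp: card_insert_if)
    also have "\<dots> = card W" using assms finW
      by (simp add: card_image card_Diff_singleton) (metis Suc_pred card_gt_0_iff emptyE)
    finally show ?thesis .
  qed
  moreover have "finite (insert (Inr c) (Inl ` (W - {x})))" using finW by simp
  ultimately show ?thesis using card_mono[OF _ sub] by (meson le_trans)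
qed

lemma card_nb_r: assumes "y \<in> W" "y \<noteq> c" shows "card (nb V' F (Inr y)) \<le> card W"
proof -
  have sub: "nb V' F (Inr y) \<subseteq> Inr ` W"
    using assms gc by (auto simp: nb_def functigraph_vertices_def)
  show ?thesis using card_mono[OF _ sub] finW by (simp add: card_image)
qed

lemma fix_c:
  assumes f: "f \<in> automorphisms V' F"
  shows "f (Inr c) = Inr c"
proof (rule ccontr)
  assume ne: "f (Inr c) \<noteq> Inr c"
  have cV: "Inr c \<in> V'" using cW by (simp add: functigraph_vertices_def)
  have "f (Inr c) \<in> V'" using f cV by (auto simp: automorphisms_def bij_betw_def)
  then have "card (nb V' F (f (Inr c))) \<le> card W"
    using ne card_nb_l card_nb_r by (auto simp: functigraph_vertices_def)
  then show False using aut_nb[OF f cV] card_nb_c by simp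
qed

lemma decomp:
  assumes f: "f \<in> automorphisms V' F"
  shows "\<exists>\<sigma> \<tau>. \<sigma> \<in> automorphisms W E \<and> \<tau> \<in> automorphisms W E \<and> \<tau> c = c \<and>
     (\<forall>x\<in>W. f (Inl x) = Inl (\<sigma> x) \<and> f (Inr x) = Inr (\<tau> x))"
proof -
  have b: "bij_betw f V' V'" and e: "\<And>u v. u \<in> V' \<Longrightarrow> v \<in> V' \<Longrightarrow> F u v \<longleftrightarrow> F (f u) (f v)"
    using f by (auto simp: automorphisms_def)
  have inj: "inj_on f V'" and fV: "\<And>x. x \<in> V' \<Longrightarrow> f x \<in> V'" using b by (auto simp: bij_betw_def)
  have fc: "f (Inr c) = Inr c" using fix_c[OF f] .
  have cV: "Inr c \<in> V'" using cW by (simp add: functigraph_vertices_def)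
  have step: "f q \<in> Inr ` (W - {c})"
    if p: "p \<in> V'" and q: "q \<in> V'" and pq: "F p q" and fp: "f p \<in> Inr ` (W - {c})"
      and qc: "q \<noteq> Inr c" for p q
  proof -
    obtain y where y: "f p = Inr y" "y \<in> W" "y \<noteq> c" using fp by auto
    have F2: "F (Inr y) (f q)" using e[OF p q] pq y by simp
    have fqV: "f q \<in> V'" using fV q .
    have "f q \<noteq> Inr c" using qc fc inj q cV by (metis inj_on_contraD)
    then show ?thesis using F2 fqV y gc
      by (cases "f q") (auto simp: functigraph_vertices_def)
  qed
  have left: "f (Inl x) \<in> Inl ` W" if x: "x \<in> W" for x
  proof (rule ccontr)
    assume nl: "f (Inl x) \<notin> Inl ` W"
    have xV: "Inl x \<in> V'" using x by (simp add: functigraph_vertices_def)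
    then have "f (Inl x) \<in> V'" using fV by blast
    then obtain y where y: "f (Inl x) = Inr y" "y \<in> W" using nl by (auto simp: functigraph_vertices_def)
    have "y \<noteq> c" using y fc inj xV cV by (metis Inl_Inr_False inj_on_contraD)
    then have fx: "f (Inl x) \<in> Inr ` (W - {c})" using y by auto
    have all: "f (Inl x') \<in> Inr ` (W - {c})" if x': "x' \<in> W" for x'
    proof -
      have x'V: "Inl x' \<in> V'" using x' by (simp add: functigraph_vertices_def)
      from near[OF x x'] show ?thesis
      proof
        assume "E x x'" then show ?thesis using step[OF xV x'V _ fx] by simp
      next
        assume "\<exists>m. E x m \<and> E m x'"
        then obtain m where m: "E x m" "E m x'" by blast
        have mV: "Inl m \<in> V'" using Ein m by (simp add: functigraph_vertices_def)
        have "f (Inl m) \<in> Inr ` (W - {c})" using step[OF xV mV _ fx] m by simp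
        then show ?thesis using step[OF mV x'V] m by simp
      qed
    qed
    have "inj_on f (Inl ` W)" using inj by (rule inj_on_subset) (auto simp: functigraph_vertices_def)
    then have "card (f ` (Inl ` W)) = card W" by (simp add: card_image)
    moreover have "card (f ` (Inl ` W)) \<le> card (Inr ` (W - {c}) :: ('v+'v) set)"
      using all finW by (intro card_mono) auto
    moreover have "card (Inr ` (W - {c}) :: ('v+'v) set) = card W - 1"
      using finW cW by (simp add: card_image)
    moreover have "card W > 0" using finW cW by (auto simp: card_gt_0_iff)
    ultimately show False by linarith
  qed
  have injl: "inj_on f (Inl ` W)" using inj by (rule inj_on_subset) (auto simp: functigraph_vertices_def)
  have surjl: "f ` (Inl ` W) = Inl ` W"
    using endo_inj_surj[OF _ _ injl] left finW by blast
  have right: "f (Inr y) \<in> Inr ` W" if y: "y \<in> W" for y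
  proof (rule ccontr)
    assume nr: "f (Inr y) \<notin> Inr ` W"
    have yV: "Inr y \<in> V'" using y by (simp add: functigraph_vertices_def)
    then have "f (Inr y) \<in> V'" using fV by blast
    then have "f (Inr y) \<in> Inl ` W" using nr by (auto simp: functigraph_vertices_def)
    then obtain x where x: "x \<in> W" "f (Inr y) = f (Inl x)" using surjl by (metis imageE image_eqI surjl)
    have "Inl x \<in> V'" using x by (simp add: functigraph_vertices_def)
    then show False using inj yV x by (metis Inl_Inr_False inj_onD)
  qed
  define \<sigma> where "\<sigma> x = (if x \<in> W then projl (f (Inl x)) else x)" for x
  define \<tau> where "\<tau> x = (if x \<in> W then projr (f (Inr x)) else x)" for x
  have sl: "f (Inl x) = Inl (\<sigma> x)" "\<sigma> x \<in> W" if "x \<in> W" for x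
    using left[OF that] that by (auto simp: \<sigma>_def)
  have sr: "f (Inr x) = Inr (\<tau> x)" "\<tau> x \<in> W" if "x \<in> W" for x
    using right[OF that] that by (auto simp: \<tau>_def)
  have as: "\<sigma> \<in> automorphisms W E"
  proof -
    have i: "inj_on \<sigma> W"
    proof (rule inj_onI)
      fix x y assume "x \<in> W" "y \<in> W" "\<sigma> x = \<sigma> y"
      then have "f (Inl x) = f (Inl y)" using sl by simp
      then show "x = y" using inj \<open>x \<in> W\<close> \<open>y \<in> W\<close>
        by (auto simp: functigraph_vertices_def dest: inj_onD)
    qed
    have "\<sigma> ` W = W" using endo_inj_surj[OF finW _ i] sl by blast
    moreover have "E u v \<longleftrightarrow> E (\<sigma> u) (\<sigma> v)" if "u \<in> W" "v \<in> W" for u v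
      using e[of "Inl u" "Inl v"] that sl by (simp add: functigraph_vertices_def)
    ultimately show ?thesis using i by (auto simp: automorphisms_def bij_betw_def \<sigma>_def)
  qed
  have at: "\<tau> \<in> automorphisms W E"
  proof -
    have i: "inj_on \<tau> W"
    proof (rule inj_onI)
      fix x y assume "x \<in> W" "y \<in> W" "\<tau> x = \<tau> y"
      then have "f (Inr x) = f (Inr y)" using sr by simp
      then show "x = y" using inj \<open>x \<in> W\<close> \<open>y \<in> W\<close>
        by (auto simp: functigraph_vertices_def dest: inj_onD)
    qed
    have "\<tau> ` W = W" using endo_inj_surj[OF finW _ i] sr by blast
    moreover have "E u v \<longleftrightarrow> E (\<tau> u) (\<tau> v)" if "u \<in> W" "v \<in> W" for u v
      using e[of "Inr u" "Inr v"] that sr by (simp add: functigraph_vertices_def)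
    ultimately show ?thesis using i by (auto simp: automorphisms_def bij_betw_def \<tau>_def)
  qed
  have "\<tau> c = c" using sr(1)[OF cW] fc by simp
  then show ?thesis using as at sl sr by blast
qed

definition pr :: "('v \<Rightarrow> 'v) \<Rightarrow> ('v \<Rightarrow> 'v) \<Rightarrow> 'v + 'v \<Rightarrow> 'v + 'v" where
  "pr \<sigma> \<tau> x = (case x of Inl a \<Rightarrow> Inl (\<sigma> a) | Inr b \<Rightarrow> Inr (\<tau> b))"

lemma compose:
  assumes as: "\<sigma> \<in> automorphisms W E" and at: "\<tau> \<in> automorphisms W E" and tc: "\<tau> c = c"
  shows "pr \<sigma> \<tau> \<in> automorphisms V' F"
proof -
  have bs: "bij_betw \<sigma> W W" and os: "\<And>x. x \<notin> W \<Longrightarrow> \<sigma> x = x"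
    and es: "\<And>u v. u \<in> W \<Longrightarrow> v \<in> W \<Longrightarrow> E u v \<longleftrightarrow> E (\<sigma> u) (\<sigma> v)"
    using as by (auto simp: automorphisms_def)
  have bt: "bij_betw \<tau> W W" and ot: "\<And>x. x \<notin> W \<Longrightarrow> \<tau> x = x"
    and et: "\<And>u v. u \<in> W \<Longrightarrow> v \<in> W \<Longrightarrow> E u v \<longleftrightarrow> E (\<tau> u) (\<tau> v)"
    using at by (auto simp: automorphisms_def)
  have inj: "inj_on (pr \<sigma> \<tau>) V'"
  proof (rule inj_onI)
    fix x y assume "x \<in> V'" "y \<in> V'" "pr \<sigma> \<tau> x = pr \<sigma> \<tau> y"
    then show "x = y" using bs bt
      by (cases x; cases y) (auto simp: pr_def functigraph_vertices_def bij_betw_def dest: inj_onD)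
  qed
  have img: "pr \<sigma> \<tau> ` V' = V'"
  proof -
    have "pr \<sigma> \<tau> ` V' = Inl ` (\<sigma> ` W) \<union> Inr ` (\<tau> ` W)"
      by (auto simp: pr_def functigraph_vertices_def image_image image_Un)
    then show ?thesis using bs bt by (simp add: bij_betw_def functigraph_vertices_def)
  qed
  have out: "pr \<sigma> \<tau> x = x" if "x \<notin> V'" for x
    using that os ot by (cases x) (auto simp: pr_def functigraph_vertices_def)
  have edges: "F u v \<longleftrightarrow> F (pr \<sigma> \<tau> u) (pr \<sigma> \<tau> v)" if "u \<in> V'" "v \<in> V'" for u v
  proof -
    have sW: "\<And>x. x \<in> W \<Longrightarrow> \<sigma> x \<in> W" and tW: "\<And>x. x \<in> W \<Longrightarrow> \<tau> x \<in> W"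
      using bs bt by (auto simp: bij_betw_def)
    have ti: "\<And>y. y \<in> W \<Longrightarrow> \<tau> y = c \<longleftrightarrow> y = c"
      using bt tc cW by (metis bij_betw_def inj_onD)
    show ?thesis using that es et sW tW ti gc
      by (cases u; cases v) (auto simp: pr_def functigraph_vertices_def)
  qed
  show ?thesis using inj img out edges by (auto simp: automorphisms_def bij_betw_def)
qed


lemma id_aut: "(\<lambda>x. x) \<in> automorphisms W E"
  by (auto simp: automorphisms_def bij_betw_def)

lemma W_fixing: "fixing_set W E W"
  by (auto simp: fixing_set_def)

lemma V'_fixing: "fixing_set V' F V'"
  by (auto simp: fixing_set_def)

lemma fix_le: "fixing_set W E S \<Longrightarrow> fixing_number W E \<le> card S"
  unfolding fixing_number_def by (rule Least_le) blast

lemma fixF_le: "fixing_set V' F S \<Longrightarrow> fixing_number V' F \<le> card S"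
  unfolding fixing_number_def by (rule Least_le) blast

lemma bounds:
  "fixing_number V' F \<le> 2 * fixing_number W E \<and> 2 * fixing_number W E \<le> fixing_number V' F + 1"
proof
  obtain S0 where S0: "fixing_set W E S0" "card S0 = fixing_number W E"
    using LeastI_ex[of "\<lambda>n. \<exists>S. fixing_set W E S \<and> card S = n"] W_fixing
    unfolding fixing_number_def by blast
  have S0W: "S0 \<subseteq> W" using S0 by (simp add: fixing_set_def)
  have finS0: "finite S0" using S0W finW finite_subset by blast
  let ?S = "Inl ` S0 \<union> Inr ` S0 :: ('v+'v) set"
  have "fixing_set V' F ?S"
    unfolding fixing_set_def
  proof (intro conjI ballI impI)
    show "?S \<subseteq> V'" using S0W by (auto simp: functigraph_vertices_def)
    fix f v assume f: "f \<in> automorphisms V' F" and fs: "\<forall>s\<in>?S. f s = s" and v: "v \<in> V'"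
    obtain \<sigma> \<tau> where st: "\<sigma> \<in> automorphisms W E" "\<tau> \<in> automorphisms W E"
      "\<forall>x\<in>W. f (Inl x) = Inl (\<sigma> x) \<and> f (Inr x) = Inr (\<tau> x)"
      using decomp[OF f] by blast
    have "\<forall>s\<in>S0. \<sigma> s = s" using fs st(3) S0W by force
    then have s1: "\<forall>v\<in>W. \<sigma> v = v" using S0(1) st(1) by (auto simp: fixing_set_def)
    have "\<forall>s\<in>S0. \<tau> s = s" using fs st(3) S0W by force
    then have s2: "\<forall>v\<in>W. \<tau> v = v" using S0(1) st(2) by (auto simp: fixing_set_def)
    show "f v = v" using v s1 s2 st(3) by (auto simp: functigraph_vertices_def)
  qed
  then have "fixing_number V' F \<le> card ?S" by (rule fixF_le)
  also have "card ?S = 2 * card S0"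
    using finS0 by (subst card_Un_disjoint) (auto simp: card_image)
  finally show "fixing_number V' F \<le> 2 * fixing_number W E" using S0 by simp
next
  obtain S where S: "fixing_set V' F S" "card S = fixing_number V' F"
    using LeastI_ex[of "\<lambda>n. \<exists>S. fixing_set V' F S \<and> card S = n"] V'_fixing
    unfolding fixing_number_def by blast
  have SV: "S \<subseteq> V'" using S by (simp add: fixing_set_def)
  define SA where "SA = {x. Inl x \<in> S}"
  define SB where "SB = {x. Inr x \<in> S}"
  have SAW: "SA \<subseteq> W" and SBW: "SB \<subseteq> W" using SV by (auto simp: SA_def SB_def functigraph_vertices_def)
  have finA: "finite SA" and finB: "finite SB" using SAW SBW finW finite_subset by blast+
  have Seq: "S = Inl ` SA \<union> Inr ` SB"
  proof
    show "S \<subseteq> Inl ` SA \<union> Inr ` SB"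
    proof
      fix x assume "x \<in> S" then show "x \<in> Inl ` SA \<union> Inr ` SB"
        by (cases x) (auto simp: SA_def SB_def)
    qed
  qed (auto simp: SA_def SB_def)
  have cardS: "card S = card SA + card SB"
    unfolding Seq using finA finB by (subst card_Un_disjoint) (auto simp: card_image)
  have fS: "\<forall>v\<in>V'. f v = v" if "f \<in> automorphisms V' F" "\<forall>s\<in>S. f s = s" for f
    using S(1) that by (auto simp: fixing_set_def)
  have "fixing_set W E SA"
    unfolding fixing_set_def
  proof (intro conjI ballI impI)
    show "SA \<subseteq> W" by (rule SAW)
    fix \<sigma> v assume \<sigma>: "\<sigma> \<in> automorphisms W E" and fs: "\<forall>s\<in>SA. \<sigma> s = s" and v: "v \<in> W"
    have "pr \<sigma> (\<lambda>x. x) \<in> automorphisms V' F" using compose[OF \<sigma> id_aut] by simp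
    moreover have "\<forall>s\<in>S. pr \<sigma> (\<lambda>x. x) s = s"
      using fs by (auto simp: Seq pr_def)
    ultimately have "\<forall>u\<in>V'. pr \<sigma> (\<lambda>x. x) u = u" by (rule fS)
    then have "pr \<sigma> (\<lambda>x. x) (Inl v) = Inl v" using v by (auto simp: functigraph_vertices_def)
    then show "\<sigma> v = v" by (simp add: pr_def)
  qed
  then have A: "fixing_number W E \<le> card SA" by (rule fix_le)
  have "fixing_set W E (insert c SB)"
    unfolding fixing_set_def
  proof (intro conjI ballI impI)
    show "insert c SB \<subseteq> W" using SBW cW by auto
    fix \<tau> v assume \<tau>: "\<tau> \<in> automorphisms W E" and fs: "\<forall>s\<in>insert c SB. \<tau> s = s" and v: "v \<in> W"
    have "pr (\<lambda>x. x) \<tau> \<in> automorphisms V' F" using compose[OF id_aut \<tau>] fs by simp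
    moreover have "\<forall>s\<in>S. pr (\<lambda>x. x) \<tau> s = s"
      using fs by (auto simp: Seq pr_def)
    ultimately have "\<forall>u\<in>V'. pr (\<lambda>x. x) \<tau> u = u" by (rule fS)
    then have "pr (\<lambda>x. x) \<tau> (Inr v) = Inr v" using v by (auto simp: functigraph_vertices_def)
    then show "\<tau> v = v" by (simp add: pr_def)
  qed
  then have "fixing_number W E \<le> card (insert c SB)" by (rule fix_le)
  also have "\<dots> \<le> card SB + 1" using finB by (simp add: card_insert_if)
  finally show "2 * fixing_number W E \<le> fixing_number V' F + 1"
    using A cardS S(2) by linarith
qed

end

theorem proposition3p13:
  fixes V1 :: "'a set" and E1 :: "'a \<Rightarrow> 'a \<Rightarrow> bool"
    and V2 :: "'b set" and E2 :: "'b \<Rightarrow> 'b \<Rightarrow> bool"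
    and g :: "'a + 'b \<Rightarrow> 'a + 'b"
  assumes "connected_graph V1 E1"
    and "connected_graph V2 E2"
    and "g ` join_vertices V1 V2 \<subseteq> join_vertices V1 V2"
    and "\<exists>c\<in>join_vertices V1 V2. \<forall>u\<in>join_vertices V1 V2. g u = c"
  shows "\<exists>i\<in>{0::int, 1}.
    int (fixing_number (functigraph_vertices (join_vertices V1 V2))
                       (functigraph_edges (join_vertices V1 V2) (join_edges V1 E1 V2 E2) g))
    = 2 * int (fixing_number (join_vertices V1 V2) (join_edges V1 E1 V2 E2)) - i"
proof -
  obtain c where c: "c \<in> join_vertices V1 V2" "\<forall>u\<in>join_vertices V1 V2. g u = c" using assms(4) by blast
  have g1: "finite V1" "\<And>u v. E1 u v \<Longrightarrow> u \<in> V1 \<and> v \<in> V1" "\<And>u. \<not> E1 u u" "V1 \<noteq> {}"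
    using assms(1) by (auto simp: connected_graph_def simple_graph_def)
  have g2: "finite V2" "\<And>u v. E2 u v \<Longrightarrow> u \<in> V2 \<and> v \<in> V2" "\<And>u. \<not> E2 u u" "V2 \<noteq> {}"
    using assms(2) by (auto simp: connected_graph_def simple_graph_def)
  obtain a0 where a0: "a0 \<in> V1" using g1(4) by blast
  obtain b0 where b0: "b0 \<in> V2" using g2(4) by blast
  interpret setting "join_vertices V1 V2" "join_edges V1 E1 V2 E2" g c
  proof
    show "finite (join_vertices V1 V2)" using g1 g2 by (simp add: join_vertices_def)
    show "join_edges V1 E1 V2 E2 x y \<Longrightarrow> x \<in> join_vertices V1 V2 \<and> y \<in> join_vertices V1 V2" for x y
      using g1 g2 by (cases x; cases y) (auto simp: join_vertices_def)
    show "\<not> join_edges V1 E1 V2 E2 x x" for x using g1 g2 by (cases x) auto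
    show "c \<in> join_vertices V1 V2" by (rule c(1))
    show "u \<in> join_vertices V1 V2 \<Longrightarrow> g u = c" for u using c(2) by blast
    show "\<exists>m\<in>join_vertices V1 V2. join_edges V1 E1 V2 E2 c m"
    proof (cases c)
      case (Inl x) then show ?thesis using c(1) b0
        by (intro bexI[of _ "Inr b0"]) (auto simp: join_vertices_def)
    next
      case (Inr x) then show ?thesis using c(1) a0
        by (intro bexI[of _ "Inl a0"]) (auto simp: join_vertices_def)
    qed
    show "join_edges V1 E1 V2 E2 x y \<or> (\<exists>m. join_edges V1 E1 V2 E2 x m \<and> join_edges V1 E1 V2 E2 m y)"
      if "x \<in> join_vertices V1 V2" "y \<in> join_vertices V1 V2" for x y
    proof (cases x; cases y)
      fix p q assume "x = Inl p" "y = Inl q"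
      then show ?thesis using that b0
        by (intro disjI2 exI[of _ "Inr b0"]) (auto simp: join_vertices_def)
    next
      fix p q assume "x = Inr p" "y = Inr q"
      then show ?thesis using that a0
        by (intro disjI2 exI[of _ "Inl a0"]) (auto simp: join_vertices_def)
    qed (use that in \<open>auto simp: join_vertices_def\<close>)
  qed
  from bounds show ?thesis
    by (intro bexI[of _ "2 * int (fixing_number (join_vertices V1 V2) (join_edges V1 E1 V2 E2))
        - int (fixing_number (functigraph_vertices (join_vertices V1 V2))
                       (functigraph_edges (join_vertices V1 V2) (join_edges V1 E1 V2 E2) g))"]) auto
qed

end
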